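(* Let $G$ be an unweighted digraph without loops, let $0<\tau\le1$, and let $M_\tau(t)=I-At+(D-\tau I)\tau t^2+(A-S)\tau^2t^3$. Then $1/\tau$ is always an eigenvalue of $M_\tau(t)$ and its geometric multiplicity equals the number of connected components of the undirected part $G_U$. Moreover, $-1/\tau$ is an eigenvalue of $M_\tau(t)$ if and only if $G_U$ has at least one bipartite connected component, and then its geometric multiplicity equals the number of bipartite connected components of $G_U$.
   Context: $G=(V,E)$ with adjacency matrix $A$, $S=A\circ A^T$, $D=\mathrm{diag}(\mathrm{diag}(A^2))$. The undirected part $G_U$ is the undirected graph on $V$ with edge $\{i,j\}$ iff both $(i,j),(j,i)\in E$; isolated vertices count as (bipartite) connected components. The geometric multiplicity of an eigenvalue $\lambda$ of $M_\tau(t)$ is $\dim\ker M_\tau(\lambda)$. *)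

theory Defs
  imports "HOL-Analysis.Analysis"
begin

definition adj :: "('n::finite \<times> 'n) set \<Rightarrow> real^'n^'n" where
  "adj E = (\<chi> i j. if (i, j) \<in> E then 1 else 0)"

definition hadamard :: "real^'n^'n \<Rightarrow> real^'n^'n \<Rightarrow> real^'n^'n" where
  "hadamard X Y = (\<chi> i j. X $ i $ j * Y $ i $ j)"

definition symm_part :: "('n::finite \<times> 'n) set \<Rightarrow> real^'n^'n" where
  "symm_part E = hadamard (adj E) (transpose (adj E))"

definition deg_diag :: "('n::finite \<times> 'n) set \<Rightarrow> real^'n^'n" where
  "deg_diag E = (\<chi> i j. if i = j then (adj E ** adj E) $ i $ i else 0)"

definition Mtau :: "('n::finite \<times> 'n) set \<Rightarrow> real \<Rightarrow> real \<Rightarrow> real^'n^'n" where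
  "Mtau E \<tau> t = mat 1 - t *\<^sub>R adj E
      + (\<tau> * t^2) *\<^sub>R (deg_diag E - \<tau> *\<^sub>R mat 1)
      + (\<tau>^2 * t^3) *\<^sub>R (adj E - symm_part E)"

definition is_eigenvalue :: "(real \<Rightarrow> real^'n^'n) \<Rightarrow> real \<Rightarrow> bool" where
  "is_eigenvalue M lam \<longleftrightarrow> (\<exists>x. x \<noteq> 0 \<and> M lam *v x = 0)"

definition geom_mult :: "(real \<Rightarrow> real^'n^'n) \<Rightarrow> real \<Rightarrow> nat" where
  "geom_mult M lam = dim {x. M lam *v x = 0}"

definition undir_edges :: "('n \<times> 'n) set \<Rightarrow> ('n \<times> 'n) set" where
  "undir_edges E = {(i, j). (i, j) \<in> E \<and> (j, i) \<in> E}"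

text \<open>Connected components of G_U (isolated vertices are components).\<close>
definition components :: "('n \<times> 'n) set \<Rightarrow> 'n set set" where
  "components E = UNIV // ((undir_edges E)\<^sup>*)"

definition bipartite_comp :: "('n \<times> 'n) set \<Rightarrow> 'n set \<Rightarrow> bool" where
  "bipartite_comp E C \<longleftrightarrow> (\<exists>f :: 'n \<Rightarrow> bool.
      \<forall>i j. i \<in> C \<and> j \<in> C \<and> (i, j) \<in> undir_edges E \<longrightarrow> f i \<noteq> f j)"

end

theory Submission
  imports Defs
begin


lemma dim_basis:
  fixes K :: "(real^'n) set" and Cs :: "'m set set" and w :: "'m set \<Rightarrow> real^'n"
  assumes sub: "subspace K" and fin: "finite Cs"
   and disj: "\<And>C C'. C\<in>Cs \<Longrightarrow> C'\<in>Cs \<Longrightarrow> C \<noteq> C' \<Longrightarrow> C \<inter> C' = {}"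
   and rep: "\<And>C. C \<in> Cs \<Longrightarrow> rep C \<in> C"
   and wz: "\<And>C i. C\<in>Cs \<Longrightarrow> i \<notin> C \<Longrightarrow> w C $ r i = 0"
   and w1: "\<And>C. C\<in>Cs \<Longrightarrow> w C $ r (rep C) = 1"
   and wK: "\<And>C. C\<in>Cs \<Longrightarrow> w C \<in> K"
   and repr: "\<And>x. x\<in>K \<Longrightarrow> x = (\<Sum>C\<in>Cs. (x $ r (rep C)) *\<^sub>R w C)"
  shows "dim K = card Cs"
proof -
  have inj: "inj_on w Cs"
  proof (rule inj_onI)
    fix C C' assume C: "C \<in> Cs" "C' \<in> Cs" "w C = w C'"
    show "C = C'"
    proof (rule ccontr)
      assume "C \<noteq> C'"
      then have "rep C \<notin> C'" using disj[OF C(1,2)] rep[OF C(1)] by blast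
      then have "w C' $ r (rep C) = 0" using wz C by blast
      then show False using w1[OF C(1)] C(3) by simp
    qed
  qed
  have evalw: "(\<Sum>C'\<in>Cs. u C' * (w C' $ r (rep C))) = u C" if C: "C \<in> Cs" for u C
  proof -
    have "(\<Sum>C'\<in>Cs. u C' * (w C' $ r (rep C))) = (\<Sum>C'\<in>{C}. u C' * (w C' $ r (rep C)))"
    proof (rule sum.mono_neutral_right)
      show "\<forall>i\<in>Cs - {C}. u i * w i $ r (rep C) = 0"
      proof
        fix C' assume "C' \<in> Cs - {C}"
        then have "rep C \<notin> C'" using disj[of C C'] rep[OF C] C by blast
        then show "u C' * w C' $ r (rep C) = 0" using wz \<open>C' \<in> Cs - {C}\<close> by simp
      qed
    qed (use fin C in auto)
    also have "\<dots> = u C" using w1[OF C] by simp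
    finally show ?thesis .
  qed
  have ind: "independent (w ` Cs)"
  proof (rule independent_if_scalars_zero)
    show "finite (w ` Cs)" using fin by simp
    fix f v assume h: "(\<Sum>x\<in>w ` Cs. f x *\<^sub>R x) = 0" "v \<in> w ` Cs"
    then obtain C where C: "C \<in> Cs" "v = w C" by blast
    have "(\<Sum>C'\<in>Cs. f (w C') *\<^sub>R w C') = 0" using h(1) sum.reindex[OF inj, of "\<lambda>x. f x *\<^sub>R x"] by simp
    then have "(\<Sum>C'\<in>Cs. f (w C') *\<^sub>R w C') $ r (rep C) = 0" by simp
    then have "(\<Sum>C'\<in>Cs. f (w C') * (w C' $ r (rep C))) = 0" by (simp add: sum_component)
    then show "f v = 0" using evalw[OF C(1), of "\<lambda>C'. f (w C')"] C by simp
  qed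
  have "K = span (w ` Cs)"
  proof
    show "K \<subseteq> span (w ` Cs)"
    proof
      fix x assume "x \<in> K"
      then have "x = (\<Sum>C\<in>Cs. (x $ r (rep C)) *\<^sub>R w C)" by (rule repr)
      also have "\<dots> \<in> span (w ` Cs)"
        by (intro span_sum span_mul span_base) auto
      finally show "x \<in> span (w ` Cs)" .
    qed
    show "span (w ` Cs) \<subseteq> K" using sub wK by (intro span_minimal) auto
  qed
  then have "dim K = card (w ` Cs)" using dim_span_eq_card_independent[OF ind] by simp
  also have "\<dots> = card Cs" using card_image[OF inj] .
  finally show ?thesis .
qed


lemma symm_entry: "symm_part E $ i $ j = (if (i,j) \<in> undir_edges E then 1 else 0)"
  by (simp add: symm_part_def hadamard_def adj_def transpose_def undir_edges_def)

lemma deg_entry: "deg_diag E $ i $ j = (if i = j then (\<Sum>k\<in>UNIV. symm_part E $ i $ k) else 0)"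
  by (simp add: deg_diag_def matrix_matrix_mult_def symm_part_def hadamard_def transpose_def)

lemma M_entry:
  assumes "\<tau> \<noteq> 0" "\<sigma> = 1 \<or> \<sigma> = -1"
  shows "Mtau E \<tau> (\<sigma> / \<tau>) $ i $ j = (deg_diag E $ i $ j - \<sigma> * symm_part E $ i $ j) / \<tau>"
  using assms
  by (auto simp: Mtau_def mat_def power2_eq_square power3_eq_cube field_simps)

lemma M_apply:
  assumes "\<tau> \<noteq> 0" "\<sigma> = 1 \<or> \<sigma> = -1"
  shows "(Mtau E \<tau> (\<sigma> / \<tau>) *v x) $ i = (\<Sum>j\<in>UNIV. symm_part E $ i $ j * (x $ i - \<sigma> * x $ j)) / \<tau>"
proof -
  have "(Mtau E \<tau> (\<sigma> / \<tau>) *v x) $ i = (\<Sum>j\<in>UNIV. (deg_diag E $ i $ j - \<sigma> * symm_part E $ i $ j) / \<tau> * x $ j)"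
    by (simp add: matrix_vector_mult_def M_entry[OF assms])
  also have "\<dots> = (\<Sum>j\<in>UNIV. deg_diag E $ i $ j * x $ j)/\<tau> - (\<Sum>j\<in>UNIV. \<sigma> * symm_part E $ i $ j * x $ j) / \<tau>"
    by (simp add: sum_divide_distrib sum_subtractf diff_divide_distrib left_diff_distrib)
  also have "(\<Sum>j\<in>UNIV. deg_diag E $ i $ j * x $ j) = (\<Sum>k\<in>UNIV. symm_part E $ i $ k) * x $ i"
    by (simp add: deg_entry if_distrib[of "\<lambda>a. a * _"] sum.delta cong: if_cong)
  finally show ?thesis
    by (simp add: sum_distrib_right sum_subtractf diff_divide_distrib right_diff_distrib mult_ac sum_distrib_left)
qed


lemma quad:
  fixes s :: "'n::finite \<Rightarrow> 'n \<Rightarrow> real" and x :: "'n \<Rightarrow> real"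
  assumes sym: "\<And>i j. s i j = s j i" and nn: "\<And>i j. s i j \<ge> 0" and sg: "\<sigma> * \<sigma> = 1"
   and h: "\<And>i. (\<Sum>j\<in>UNIV. s i j * (x i - \<sigma> * x j)) = 0"
  shows "s i j * (x i - \<sigma> * x j)^2 = 0"
proof -
  have sq: "s i j * (x i - \<sigma> * x j)^2 = s i j * (x i * (x i - \<sigma> * x j)) + s j i * (x j * (x j - \<sigma> * x i))" for i j
  proof -
    have "(x i - \<sigma> * x j)^2 = x i * (x i - \<sigma> * x j) + x j * (x j - \<sigma> * x i) + (\<sigma>*\<sigma> - 1) * x j * x j"
      by (simp add: power2_eq_square algebra_simps)
    then have "(x i - \<sigma> * x j)^2 = x i * (x i - \<sigma> * x j) + x j * (x j - \<sigma> * x i)"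
      using sg by simp
    then show ?thesis using sym[of i j] by (simp add: distrib_left)
  qed
  have A: "(\<Sum>i\<in>UNIV. \<Sum>j\<in>UNIV. s i j * (x i * (x i - \<sigma> * x j))) = 0"
  proof -
    have "(\<Sum>i\<in>UNIV. \<Sum>j\<in>UNIV. s i j * (x i * (x i - \<sigma> * x j))) = (\<Sum>i\<in>UNIV. x i * (\<Sum>j\<in>UNIV. s i j * (x i - \<sigma> * x j)))"
      by (simp add: sum_distrib_left algebra_simps)
    also have "\<dots> = 0" using h by simp
    finally show ?thesis .
  qed
  have B: "(\<Sum>i\<in>UNIV. \<Sum>j\<in>UNIV. s j i * (x j * (x j - \<sigma> * x i))) = 0"
    using A sum.swap[of "\<lambda>i j. s j i * (x j * (x j - \<sigma> * x i))" UNIV UNIV] by simp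
  have T: "(\<Sum>i\<in>UNIV. \<Sum>j\<in>UNIV. s i j * (x i - \<sigma> * x j)^2) = 0"
    using A B by (simp add: sq sum.distrib)
  have "\<forall>i\<in>UNIV. (\<Sum>j\<in>UNIV. s i j * (x i - \<sigma> * x j)^2) = 0"
    using T by (subst sum_nonneg_eq_0_iff[symmetric]) (auto intro!: sum_nonneg simp: nn)
  then have "\<forall>j\<in>UNIV. s i j * (x i - \<sigma> * x j)^2 = 0"
    by (subst sum_nonneg_eq_0_iff[symmetric]) (auto simp: nn)
  then show ?thesis by simp
qed

definition ker :: "('n \<times> 'n) set \<Rightarrow> real \<Rightarrow> (real^'n) set" where
  "ker E \<sigma> = {x. \<forall>i j. (i,j) \<in> undir_edges E \<longrightarrow> x $ i = \<sigma> * x $ j}"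

lemma kernel:
  fixes E :: "('n::finite \<times> 'n) set"
  assumes t: "\<tau> \<noteq> 0" and sg: "\<sigma> = 1 \<or> \<sigma> = -1"
  shows "{x. Mtau E \<tau> (\<sigma> / \<tau>) *v x = 0} = ker E \<sigma>"
proof (intro set_eqI iffI)
  fix x assume "x \<in> {x. Mtau E \<tau> (\<sigma> / \<tau>) *v x = 0}"
  then have "\<And>i. (Mtau E \<tau> (\<sigma> / \<tau>) *v x) $ i = 0" by simp
  then have h: "\<And>i. (\<Sum>j\<in>UNIV. symm_part E $ i $ j * (x $ i - \<sigma> * x $ j)) = 0"
    using t by (simp add: M_apply[OF t sg])
  have sq0: "symm_part E $ i $ j * (x $ i - \<sigma> * x $ j)^2 = 0" for i j
    by (rule quad[where s="\<lambda>i j. symm_part E $ i $ j" and x="\<lambda>i. x $ i", OF _ _ _ h])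
       (use sg in \<open>auto simp: symm_entry undir_edges_def\<close>)
  show "x \<in> ker E \<sigma>" unfolding ker_def
  proof (intro CollectI allI impI)
    fix i j assume "(i, j) \<in> undir_edges E"
    then have "(x $ i - \<sigma> * x $ j)^2 = 0" using sq0[of i j] by (simp add: symm_entry)
    then show "x $ i = \<sigma> * x $ j" by simp
  qed
next
  fix x assume "x \<in> ker E \<sigma>"
  then have z: "\<And>i j. symm_part E $ i $ j * (x $ i - \<sigma> * x $ j) = 0"
    by (auto simp: ker_def symm_entry)
  then show "x \<in> {x. Mtau E \<tau> (\<sigma> / \<tau>) *v x = 0}"
    by (simp add: vec_eq_iff M_apply[OF t sg] z del: mult_eq_0_iff)
qed


lemma symU: "(i,j) \<in> undir_edges E \<Longrightarrow> (j,i) \<in> undir_edges E"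
  by (simp add: undir_edges_def)

lemma equivR: "equiv UNIV ((undir_edges E)\<^sup>*)"
proof -
  have "sym (undir_edges E)" by (auto simp: sym_def undir_edges_def)
  then have "sym ((undir_edges E)\<^sup>*)" by (rule sym_rtrancl)
  then show ?thesis by (simp add: equiv_def refl_rtrancl trans_rtrancl)
qed

lemma comp_closed:
  assumes "C \<in> components E" "i \<in> C" "(i,j) \<in> (undir_edges E)\<^sup>*"
  shows "j \<in> C"
proof -
  from assms(1) obtain r where C: "C = (undir_edges E)\<^sup>* `` {r}"
    unfolding components_def by (auto elim: quotientE)
  then show ?thesis using assms(2,3) by (auto intro: rtrancl_trans)
qed

lemma comp_rel:
  assumes "C \<in> components E" "i \<in> C" "j \<in> C"
  shows "(i,j) \<in> (undir_edges E)\<^sup>*"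
proof -
  from assms(1) obtain r where C: "C = (undir_edges E)\<^sup>* `` {r}"
    unfolding components_def by (auto elim: quotientE)
  then have "(r,i) \<in> (undir_edges E)\<^sup>*" "(r,j) \<in> (undir_edges E)\<^sup>*" using assms by auto
  moreover have "sym ((undir_edges E)\<^sup>*)" using equivR[of E] by (simp add: equiv_def)
  ultimately show ?thesis by (meson rtrancl_trans symD)
qed

lemma comp_of: "(undir_edges E)\<^sup>* `` {i} \<in> components E" "i \<in> (undir_edges E)\<^sup>* `` {i}"
  by (auto simp: components_def intro: quotientI)

lemma comp_unique:
  assumes "C \<in> components E" "i \<in> C" shows "C = (undir_edges E)\<^sup>* `` {i}"
  using assms comp_closed[OF assms] comp_rel[OF assms(1,2)] by blast

lemma prop1:
  assumes "x \<in> ker E 1" "(a,b) \<in> (undir_edges E)\<^sup>*" shows "x $ b = x $ a"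
  using assms(2)
proof induction
  case (step b c)
  then have "x $ b = x $ c" using assms(1) by (auto simp: ker_def)
  then show ?case using step by simp
qed simp

lemma propabs:
  assumes "x \<in> ker E (-1)" "(a,b) \<in> (undir_edges E)\<^sup>*" shows "\<bar>x $ b\<bar> = \<bar>x $ a\<bar>"
  using assms(2)
proof induction
  case (step b c)
  then have "x $ b = - x $ c" using assms(1) by (auto simp: ker_def)
  then show ?case using step by simp
qed simp

lemma propbip:
  fixes f :: "'n::finite \<Rightarrow> bool"
  assumes "x \<in> ker E (-1)" "C \<in> components E"
    and f: "\<forall>i j. i \<in> C \<and> j \<in> C \<and> (i, j) \<in> undir_edges E \<longrightarrow> f i \<noteq> f j"
    and "a \<in> C" "(a,b) \<in> (undir_edges E)\<^sup>*"
  shows "x $ b = (if f a = f b then x $ a else - x $ a)"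
  using assms(5)
proof induction
  case (step b c)
  have bc: "b \<in> C" "c \<in> C" using comp_closed[OF assms(2) assms(4)] step
    by (auto intro: rtrancl_into_rtrancl)
  then have "f b \<noteq> f c" using f step by blast
  moreover have "x $ b = - x $ c" using assms(1) step by (auto simp: ker_def)
  moreover have "(f a = f c) \<longleftrightarrow> (f a \<noteq> f b)" using calculation(1)
    by (cases "f a"; cases "f b"; cases "f c") auto
  ultimately show ?case using step.IH by (cases "f a = f b") (auto split: if_splits)
qed simp

lemma nonbip:
  assumes "x \<in> ker E (-1)" "x $ i \<noteq> 0"
  shows "bipartite_comp E ((undir_edges E)\<^sup>* `` {i})"
  unfolding bipartite_comp_def
proof (intro exI[of _ "\<lambda>j. x $ j > 0"] allI impI)
  fix j k assume h: "j \<in> (undir_edges E)\<^sup>* `` {i} \<and> k \<in> (undir_edges E)\<^sup>* `` {i} \<and> (j, k) \<in> undir_edges E"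
  then have "\<bar>x $ j\<bar> = \<bar>x $ i\<bar>" using propabs[OF assms(1)] by auto
  then have "x $ j \<noteq> 0" using assms(2) by auto
  moreover have "x $ j = - x $ k" using assms(1) h by (auto simp: ker_def)
  ultimately show "(0 < x $ j) \<noteq> (0 < x $ k)" by auto
qed

lemma subspace_ker: "subspace (ker E \<sigma>)"
  by (auto simp: subspace_def ker_def algebra_simps)

lemma bool_lemma: "(a::bool) \<noteq> b \<Longrightarrow> (b = r) \<longleftrightarrow> \<not> (a = r)" by auto

theorem proposition4p1:
  fixes E :: "('n::finite \<times> 'n) set" and \<tau> :: real
  assumes noloops: "\<forall>v. (v, v) \<notin> E"
    and tau_pos: "0 < \<tau>" and tau_le: "\<tau> \<le> 1"
  shows "is_eigenvalue (Mtau E \<tau>) (1 / \<tau>)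
       \<and> geom_mult (Mtau E \<tau>) (1 / \<tau>) = card (components E)
       \<and> (is_eigenvalue (Mtau E \<tau>) (- 1 / \<tau>)
            \<longleftrightarrow> (\<exists>C \<in> components E. bipartite_comp E C))
       \<and> (is_eigenvalue (Mtau E \<tau>) (- 1 / \<tau>)
            \<longrightarrow> geom_mult (Mtau E \<tau>) (- 1 / \<tau>)
                = card {C \<in> components E. bipartite_comp E C})"
proof -
  let ?R = "(undir_edges E)\<^sup>*"
  have t: "\<tau> \<noteq> 0" using tau_pos by simp
  have K1: "{x. Mtau E \<tau> (1 / \<tau>) *v x = 0} = ker E 1" using kernel[OF t, of 1] by simp
  have K2: "{x. Mtau E \<tau> (- 1 / \<tau>) *v x = 0} = ker E (-1)" using kernel[OF t, of "-1"] by simp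
  have eig1: "is_eigenvalue (Mtau E \<tau>) (1 / \<tau>) \<longleftrightarrow> (\<exists>x. x \<noteq> 0 \<and> x \<in> ker E 1)"
    unfolding is_eigenvalue_def using K1 by blast
  have eig2: "is_eigenvalue (Mtau E \<tau>) (- 1 / \<tau>) \<longleftrightarrow> (\<exists>x. x \<noteq> 0 \<and> x \<in> ker E (-1))"
    unfolding is_eigenvalue_def using K2 by blast
  have gm1: "geom_mult (Mtau E \<tau>) (1 / \<tau>) = dim (ker E 1)" unfolding geom_mult_def K1 ..
  have gm2: "geom_mult (Mtau E \<tau>) (- 1 / \<tau>) = dim (ker E (-1))" unfolding geom_mult_def K2 ..
  define rep where "rep C = (SOME r. r \<in> C)" for C :: "'n set"
  have rep: "rep C \<in> C" if "C \<in> components E" for C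
  proof -
    from that obtain r where "C = ?R `` {r}" unfolding components_def by (auto elim: quotientE)
    then have "r \<in> C" by auto
    then show ?thesis unfolding rep_def by (rule someI)
  qed
  have disj: "C \<inter> C' = {}" if "C \<in> components E" "C' \<in> components E" "C \<noteq> C'" for C C'
    using quotient_disj[OF equivR[of E]] that unfolding components_def by blast
  have fin: "finite (components E)" by simp
  have ev1: "is_eigenvalue (Mtau E \<tau>) (1 / \<tau>)"
  proof -
    have "((\<chi> i. 1) :: real^'n) \<in> ker E 1" by (simp add: ker_def)
    moreover have "((\<chi> i. 1) :: real^'n) \<noteq> 0" by (simp add: vec_eq_iff)
    ultimately show ?thesis using eig1 by blast
  qed
  define w1 where "w1 C = (\<chi> i. (if i \<in> C then 1 else (0::real)))" for C :: "'n set"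
  have dim1: "dim (ker E 1) = card (components E)"
  proof (rule dim_basis[where rep = rep and w = w1 and r = "\<lambda>i. i"])
    show "subspace (ker E 1)" by (rule subspace_ker)
    show "finite (components E)" by simp
  next
    fix C C' assume "C \<in> components E" "C' \<in> components E" "C \<noteq> C'"
    then show "C \<inter> C' = {}" by (rule disj)
  next
    fix C assume C: "C \<in> components E"
    show "rep C \<in> C" using rep[OF C] .
    show "w1 C $ rep C = 1" using rep[OF C] by (simp add: w1_def)
    show "w1 C \<in> ker E 1" unfolding ker_def w1_def
    proof (intro CollectI allI impI)
      fix i j assume "(i, j) \<in> undir_edges E"
      then have "(i,j) \<in> ?R" "(j,i) \<in> ?R" by (auto intro: symU)
      then have "i \<in> C \<longleftrightarrow> j \<in> C" using comp_closed[OF C] by blast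
      then show "(\<chi> i. (if i \<in> C then 1 else (0::real))) $ i = 1 * (\<chi> i. (if i \<in> C then 1 else (0::real))) $ j"
        by simp
    qed
  next
    fix C i assume "C \<in> components E" "i \<notin> C"
    then show "w1 C $ i = 0" by (simp add: w1_def)
  next
    fix x assume x: "x \<in> ker E 1"
    show "x = (\<Sum>C\<in>components E. x $ rep C *\<^sub>R w1 C)"
    proof (subst vec_eq_iff, intro allI)
      fix i
      let ?C0 = "?R `` {i}"
      have C0: "?C0 \<in> components E" "i \<in> ?C0" by (rule comp_of)+
      have "(\<Sum>C\<in>components E. x $ rep C *\<^sub>R w1 C) $ i
          = (\<Sum>C\<in>components E. if C = ?C0 then x $ rep C else 0)"
      proof (subst sum_component, rule sum.cong)
        fix C assume C: "C \<in> components E"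
        have "i \<in> C \<longleftrightarrow> C = ?C0" using comp_unique[OF C] C0 by blast
        then show "(x $ rep C *\<^sub>R w1 C) $ i = (if C = ?C0 then x $ rep C else 0)"
          by (simp add: w1_def)
      qed simp
      also have "\<dots> = x $ rep ?C0" using C0 by simp
      also have "\<dots> = x $ i" using prop1[OF x comp_rel[OF C0(1) rep[OF C0(1)] C0(2)]] by simp
      finally show "x $ i = (\<Sum>C\<in>components E. x $ rep C *\<^sub>R w1 C) $ i" by simp
    qed
  qed
  let ?B = "{C \<in> components E. bipartite_comp E C}"
  define fC where "fC C = (SOME f :: 'n \<Rightarrow> bool. \<forall>i j. i \<in> C \<and> j \<in> C \<and> (i, j) \<in> undir_edges E \<longrightarrow> f i \<noteq> f j)" for C
  have fC: "\<forall>i j. i \<in> C \<and> j \<in> C \<and> (i, j) \<in> undir_edges E \<longrightarrow> fC C i \<noteq> fC C j"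
    if "C \<in> ?B" for C
  proof -
    from that obtain f :: "'n \<Rightarrow> bool" where "\<forall>i j. i \<in> C \<and> j \<in> C \<and> (i, j) \<in> undir_edges E \<longrightarrow> f i \<noteq> f j"
      unfolding bipartite_comp_def by blast
    then show ?thesis unfolding fC_def by (rule someI[where x = f])
  qed
  define w2 where "w2 C = (\<chi> i. (if i \<in> C then (if fC C i = fC C (rep C) then 1 else -1) else (0::real)))" for C :: "'n set"
  have w2K: "w2 C \<in> ker E (-1)" if C: "C \<in> ?B" for C
    unfolding ker_def
  proof (intro CollectI allI impI)
    fix i j assume ij: "(i, j) \<in> undir_edges E"
    then have "(i,j) \<in> ?R" "(j,i) \<in> ?R" by (auto intro: symU)
    moreover have Cc: "C \<in> components E" using C by simp
    ultimately have ij': "i \<in> C \<longleftrightarrow> j \<in> C" using comp_closed[OF Cc] by blast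
    show "w2 C $ i = -1 * w2 C $ j"
    proof (cases "i \<in> C")
      case True
      have jC: "j \<in> C" using True ij' by blast
      have ne: "fC C i \<noteq> fC C j" using True jC ij by (intro fC[OF C, rule_format] conjI)
      have b: "(fC C j = fC C (rep C)) \<longleftrightarrow> \<not> (fC C i = fC C (rep C))"
        by (rule bool_lemma[OF ne])
      have wi: "w2 C $ i = (if fC C i = fC C (rep C) then 1 else -1)"
        unfolding w2_def vec_lambda_beta using True by (simp only: if_P)
      have wj: "w2 C $ j = (if fC C j = fC C (rep C) then 1 else -1)"
        unfolding w2_def vec_lambda_beta using jC by (simp only: if_P)
      show ?thesis
      proof (cases "fC C i = fC C (rep C)")
        case yes: True
        then have no: "\<not> (fC C j = fC C (rep C))" using b by blast
        have "w2 C $ i = 1" by (simp only: wi if_P[OF yes])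
        moreover have "w2 C $ j = -1" by (simp only: wj if_not_P[OF no])
        ultimately show ?thesis by simp
      next
        case no: False
        then have yes: "fC C j = fC C (rep C)" using b by blast
        have "w2 C $ i = -1" by (simp only: wi if_not_P[OF no])
        moreover have "w2 C $ j = 1" by (simp only: wj if_P[OF yes])
        ultimately show ?thesis by simp
      qed
    next
      case False then show ?thesis using ij' by (simp add: w2_def)
    qed
  qed
  have w2r: "w2 C $ rep C = 1" if "C \<in> ?B" for C using rep[of C] that by (simp add: w2_def)
  have dim2: "dim (ker E (-1)) = card ?B"
  proof (rule dim_basis[where rep = rep and w = w2 and r = "\<lambda>i. i"])
    show "subspace (ker E (-1))" by (rule subspace_ker)
    show "finite ?B" by simp
  next
    fix C C' assume "C \<in> ?B" "C' \<in> ?B" "C \<noteq> C'"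
    then show "C \<inter> C' = {}" using disj by blast
  next
    fix C assume C: "C \<in> ?B"
    show "rep C \<in> C" using rep C by blast
    show "w2 C $ rep C = 1" using w2r[OF C] .
    show "w2 C \<in> ker E (-1)" using w2K[OF C] .
  next
    fix C i assume "C \<in> ?B" "i \<notin> C"
    then show "w2 C $ i = 0" by (simp add: w2_def)
  next
    fix x assume x: "x \<in> ker E (-1)"
    show "x = (\<Sum>C\<in>?B. x $ rep C *\<^sub>R w2 C)"
    proof (subst vec_eq_iff, intro allI)
      fix i
      let ?C0 = "?R `` {i}"
      have C0: "?C0 \<in> components E" "i \<in> ?C0" by (rule comp_of)+
      have "(\<Sum>C\<in>?B. x $ rep C *\<^sub>R w2 C) $ i
          = (\<Sum>C\<in>?B. if C = ?C0 then x $ rep C * w2 C $ i else 0)"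
      proof (subst sum_component, rule sum.cong)
        fix C assume C: "C \<in> ?B"
        have "i \<in> C \<longleftrightarrow> C = ?C0" using comp_unique[of C E i] C C0 by blast
        then show "(x $ rep C *\<^sub>R w2 C) $ i = (if C = ?C0 then x $ rep C * w2 C $ i else 0)"
          by (simp add: w2_def)
      qed simp
      also have "\<dots> = x $ i"
      proof (cases "?C0 \<in> ?B")
        case True
        then have "(\<Sum>C\<in>?B. if C = ?C0 then x $ rep C * w2 C $ i else 0) = x $ rep ?C0 * w2 ?C0 $ i"
          by simp
        also have "\<dots> = x $ i"
          using propbip[OF x C0(1) fC[OF True] rep[OF C0(1)] comp_rel[OF C0(1) rep[OF C0(1)] C0(2)]]
            C0(2) by (simp add: w2_def)
        finally show ?thesis .
      next
        case False
        then have "x $ i = 0" using nonbip[OF x] C0(1) by blast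
        moreover have "(\<Sum>C\<in>?B. if C = ?C0 then x $ rep C * w2 C $ i else 0) = 0"
        proof (rule sum.neutral, intro ballI)
          fix C assume "C \<in> ?B"
          then have "C \<noteq> ?C0" using False by blast
          then show "(if C = ?C0 then x $ rep C * w2 C $ i else 0) = 0" by (simp only: if_False)
        qed
        ultimately show ?thesis by linarith
      qed
      finally show "x $ i = (\<Sum>C\<in>?B. x $ rep C *\<^sub>R w2 C) $ i" by simp
    qed
  qed
  have ev2: "is_eigenvalue (Mtau E \<tau>) (- 1 / \<tau>) \<longleftrightarrow> (\<exists>C \<in> components E. bipartite_comp E C)"
  proof
    assume "is_eigenvalue (Mtau E \<tau>) (- 1 / \<tau>)"
    then obtain x where x: "x \<noteq> 0" "x \<in> ker E (-1)" using eig2 by blast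
    then obtain i where xi: "x $ i \<noteq> 0" by (metis vec_eq_iff zero_index)
    have "bipartite_comp E (?R `` {i})" by (rule nonbip[OF x(2) xi])
    moreover have "?R `` {i} \<in> components E" by (rule comp_of)
    ultimately show "\<exists>C \<in> components E. bipartite_comp E C" by (intro bexI)
  next
    assume "\<exists>C \<in> components E. bipartite_comp E C"
    then obtain C where C: "C \<in> ?B" by blast
    have "w2 C $ rep C \<noteq> 0 $ rep C" using w2r[OF C] by simp
    then have "w2 C \<noteq> 0" by metis
    then show "is_eigenvalue (Mtau E \<tau>) (- 1 / \<tau>)" using eig2 w2K[OF C] by blast
  qed
  show ?thesis
    by (intro conjI impI ev1 ev2) (simp_all only: gm1 gm2 dim1 dim2)
qed

end
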